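(* Let $A,B\in\mathrm{SL}_2\mathbb{R}$ be noncommuting, with trace $\ge 2$, coherently oriented, and let $B$ be hyperbolic. (1) Suppose $A$ is hyperbolic as well and the translation axes of $A$ and $B$ are asymptotically parallel (distinct but sharing an ideal endpoint). Then: (1.1) if $[a]\ne[b]$, the only optimal word is the one among $a$ and $b$ corresponding to the matrix with larger trace; (1.2) if $[a]=[b]$ and $I^+\cap I^-=\emptyset$, then every word is maximal, so that every Lyndon word is optimal (the complete set of optimal words is the set of all Lyndon words); if instead $[a]=[b]$ and $I^+\cap I^-\neq\emptyset$ (necessarily a singleton), then $a$ and $b$ are both optimal and there are no other optimal words. (2) If $A$ is parabolic with fixed point $\alpha^+=\alpha^-\in\{\beta^+,\beta^-\}$, then $b$ is the only optimal word.
   Context: Hyperbolic means trace $>2$, with attracting/repelling fixed points $\alpha^\pm$ (for $A$), $\beta^\pm$ (for $B$) in $\partial\mathcal{H}=\mathbb{P}^1\mathbb{R}$; a parabolic matrix (trace $2$, $\neq I$) has a unique fixed point, denoted $\alpha^+=\alpha^-$. The translation axis of a hyperbolic matrix is the geodesic joining its fixed points. Coherent orientation: with $\partial\mathcal{H}$ cyclically ordered and $[\alpha,\beta]$ the closed counterclockwise interval from $\alpha$ to $\beta$, let $I^+=\{\alpha^+\}$ if $\alpha^+=\beta^+$, and otherwise the one of $[\alpha^+,\beta^+],[\beta^+,\alpha^+]$ mapped into itself by both $A$ and $B$ (if it exists); define $I^-$ likewise with $A^{-1},B^{-1},\alpha^-,\beta^-$; the pair is coherently oriented if both exist. Words: $F_2^+$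 is the free semigroup of nonempty words over $\{a,b\}$, $|w|$ the length, $\phi(a)=A,\phi(b)=B$ extended to a homomorphism, $[w]=\mathrm{tr}(\phi(w))$. Define $w\preceq u$ iff $[w^{|u|}]\le[u^{|w|}]$; $w$ is maximal if $u\preceq w$ for all $u$. A Lyndon word is one strictly smaller lexicographically ($a<b$) than each of its proper rotations. A complete set of optimal words is a set of pairwise distinct maximal Lyndon words such that every maximal word is a power of a rotation of one of them; it is unique if it exists, and its elements are the optimal words. *)

theory Defs
  imports "HOL-Analysis.Analysis"
begin

type_synonym mat2 = "real^2^2"

text \<open>Points of the ideal boundary P^1(R) = R \<union> {\<infinity>}.\<close>
datatype pt = Fin real | Infty

definition vec_of :: "pt \<Rightarrow> real^2" where
  "vec_of p = (case p of Fin x \<Rightarrow> (\<chi> i. if i = 1 then x else 1)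
                       | Infty \<Rightarrow> (\<chi> i. if i = 1 then 1 else 0))"

definition pt_of :: "real^2 \<Rightarrow> pt" where
  "pt_of v = (if v $ 2 = 0 then Infty else Fin (v $ 1 / v $ 2))"

definition mobius :: "mat2 \<Rightarrow> pt \<Rightarrow> pt" where
  "mobius M p = pt_of (M *v vec_of p)"

definition fp_plus :: "mat2 \<Rightarrow> pt" where
  "fp_plus M = (if trace M > 2
     then (THE p. \<exists>v l. v \<noteq> 0 \<and> M *v v = l *\<^sub>R v \<and> \<bar>l\<bar> > 1 \<and> p = pt_of v)
     else (THE p. mobius M p = p))"

definition fp_minus :: "mat2 \<Rightarrow> pt" where
  "fp_minus M = (if trace M > 2
     then (THE p. \<exists>v l. v \<noteq> 0 \<and> M *v v = l *\<^sub>R v \<and> \<bar>l\<bar> < 1 \<and> p = pt_of v)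
     else (THE p. mobius M p = p))"

text \<open>Closed cyclic interval from p to q (orientation: increasing along R, through \<infinity>).
  Only used for p \<noteq> q.\<close>
fun cc :: "pt \<Rightarrow> pt \<Rightarrow> pt set" where
  "cc (Fin x) (Fin y) = (if x \<le> y then {Fin t | t. x \<le> t \<and> t \<le> y}
                         else {Fin t | t. x \<le> t} \<union> {Infty} \<union> {Fin t | t. t \<le> y})"
| "cc (Fin x) Infty = {Fin t | t. x \<le> t} \<union> {Infty}"
| "cc Infty (Fin y) = {Infty} \<union> {Fin t | t. t \<le> y}"
| "cc Infty Infty = {Infty}"

definition invariant2 :: "mat2 \<Rightarrow> mat2 \<Rightarrow> pt set \<Rightarrow> bool" where
  "invariant2 A B I \<longleftrightarrow> mobius A ` I \<subseteq> I \<and> mobius B ` I \<subseteq> I"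

definition I_of :: "mat2 \<Rightarrow> mat2 \<Rightarrow> pt \<Rightarrow> pt \<Rightarrow> pt set" where
  "I_of A B p q = (if p = q then {p}
      else (SOME I. I \<in> {cc p q, cc q p} \<and> invariant2 A B I))"

definition I_plus :: "mat2 \<Rightarrow> mat2 \<Rightarrow> pt set" where
  "I_plus A B = I_of A B (fp_plus A) (fp_plus B)"

definition I_minus :: "mat2 \<Rightarrow> mat2 \<Rightarrow> pt set" where
  "I_minus A B = I_of (matrix_inv A) (matrix_inv B) (fp_minus A) (fp_minus B)"

definition coherent :: "mat2 \<Rightarrow> mat2 \<Rightarrow> bool" where
  "coherent A B \<longleftrightarrow>
     (fp_plus A = fp_plus B \<or>
        (\<exists>I \<in> {cc (fp_plus A) (fp_plus B), cc (fp_plus B) (fp_plus A)}. invariant2 A B I)) \<and>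
     (fp_minus A = fp_minus B \<or>
        (\<exists>I \<in> {cc (fp_minus A) (fp_minus B), cc (fp_minus B) (fp_minus A)}.
            invariant2 (matrix_inv A) (matrix_inv B) I))"

text \<open>Words over {a,b} (a < b); nonempty lists represent F_2^+.\<close>
datatype letter = La | Lb

definition letter_less :: "(letter \<times> letter) set" where
  "letter_less = {(La, Lb)}"

definition gmat :: "mat2 \<Rightarrow> mat2 \<Rightarrow> letter \<Rightarrow> mat2" where
  "gmat A B x = (case x of La \<Rightarrow> A | Lb \<Rightarrow> B)"

definition phi :: "mat2 \<Rightarrow> mat2 \<Rightarrow> letter list \<Rightarrow> mat2" where
  "phi A B w = foldr (\<lambda>x M. gmat A B x ** M) w (mat 1)"

definition wtr :: "mat2 \<Rightarrow> mat2 \<Rightarrow> letter list \<Rightarrow> real" where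
  "wtr A B w = trace (phi A B w)"

definition wpow :: "letter list \<Rightarrow> nat \<Rightarrow> letter list" where
  "wpow w n = concat (replicate n w)"

definition wle :: "mat2 \<Rightarrow> mat2 \<Rightarrow> letter list \<Rightarrow> letter list \<Rightarrow> bool" where
  "wle A B w u \<longleftrightarrow> wtr A B (wpow w (length u)) \<le> wtr A B (wpow u (length w))"

definition maximal :: "mat2 \<Rightarrow> mat2 \<Rightarrow> letter list \<Rightarrow> bool" where
  "maximal A B w \<longleftrightarrow> w \<noteq> [] \<and> (\<forall>u. u \<noteq> [] \<longrightarrow> wle A B u w)"

definition lyndon :: "letter list \<Rightarrow> bool" where
  "lyndon w \<longleftrightarrow> w \<noteq> [] \<and> (\<forall>k. 0 < k \<and> k < length w \<longrightarrow> (w, rotate k w) \<in> lexord letter_less)"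

text \<open>S is a complete set of optimal words (such a set is unique if it exists;
  its elements are the optimal words).\<close>
definition complete_optimal :: "mat2 \<Rightarrow> mat2 \<Rightarrow> letter list set \<Rightarrow> bool" where
  "complete_optimal A B S \<longleftrightarrow>
     (\<forall>w \<in> S. lyndon w \<and> maximal A B w) \<and>
     (\<forall>w. maximal A B w \<longrightarrow> (\<exists>v \<in> S. \<exists>k n. n \<ge> 1 \<and> w = wpow (rotate k v) n))"

end

theory Submission
  imports Defs
begin

definition D :: "real^2 \<Rightarrow> real^2 \<Rightarrow> real" where
  "D x y = x$1 * y$2 - x$2 * y$1"

lemma mv1: "((M::mat2) *v (x::real^2))$1 = M$1$1 * x$1 + M$1$2 * x$2"
  by (simp add: matrix_vector_mult_def sum_2)
lemma mv2: "((M::mat2) *v (x::real^2))$2 = M$2$1 * x$1 + M$2$2 * x$2"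
  by (simp add: matrix_vector_mult_def sum_2)
lemma tr2: "trace (M::mat2) = M$1$1 + M$2$2"
  by (simp add: trace_def sum_2)
lemma vec2_eq: "(x::real^2) = y \<longleftrightarrow> x$1 = y$1 \<and> x$2 = y$2"
  by (simp add: vec_eq_iff forall_2)
lemma vec2_nz: "(x::real^2) \<noteq> 0 \<longleftrightarrow> x$1 \<noteq> 0 \<or> x$2 \<noteq> 0"
  by (simp add: vec_eq_iff forall_2)

lemma vec_of_simps:
  "vec_of (Fin x) $ 1 = x" "vec_of (Fin x) $ 2 = 1"
  "vec_of Infty $ 1 = 1" "vec_of Infty $ 2 = 0"
  by (simp_all add: vec_of_def)

lemma vec_of_nz: "vec_of p \<noteq> 0"
  by (cases p) (auto simp: vec2_nz vec_of_simps)

lemma pt_of_vec_of: "pt_of (vec_of p) = p"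
  by (cases p) (auto simp: pt_of_def vec_of_simps)

lemma vec_of_pt_of: assumes "x \<noteq> 0" shows "\<exists>c. c \<noteq> 0 \<and> vec_of (pt_of x) = c *\<^sub>R x"
proof (cases "x$2 = 0")
  case True
  then have "x$1 \<noteq> 0" using assms by (auto simp: vec2_nz)
  then show ?thesis using True
    by (intro exI[of _ "1 / x$1"]) (auto simp: pt_of_def vec2_eq vec_of_simps)
next
  case False
  then show ?thesis
    by (intro exI[of _ "1 / x$2"]) (auto simp: pt_of_def vec2_eq vec_of_simps)
qed

lemma pt_of_eq: assumes "x \<noteq> 0" "y \<noteq> 0" shows "pt_of x = pt_of y \<longleftrightarrow> D x y = 0"
  using assms unfolding vec2_nz
  by (auto simp: pt_of_def D_def field_simps split: if_splits)

lemma D_vec_of: "D (vec_of p) (vec_of q) = 0 \<longleftrightarrow> p = q"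
  by (metis pt_of_eq pt_of_vec_of vec_of_nz)

lemma par: assumes "D u v = 0" "v \<noteq> 0" shows "\<exists>k. u = k *\<^sub>R v"
proof (cases "v$1 = 0")
  case True
  then have "v$2 \<noteq> 0" using assms by (auto simp: vec2_nz)
  then show ?thesis using True assms
    by (intro exI[of _ "u$2 / v$2"]) (auto simp: vec2_eq D_def field_simps)
next
  case False
  then show ?thesis using assms
    by (intro exI[of _ "u$1 / v$1"]) (auto simp: vec2_eq D_def field_simps)
qed

lemma CH: "(M::mat2) *v (M *v v) = trace M *\<^sub>R (M *v v) - det M *\<^sub>R v"
  by (simp add: vec2_eq mv1 mv2 tr2 det_2 algebra_simps)

lemma eig_quad: fixes M :: mat2 assumes "v \<noteq> 0" "M *v v = l *\<^sub>R v"
  shows "l^2 - trace M * l + det M = 0"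
proof -
  have "M *v (M *v v) = (l*l) *\<^sub>R v" using assms
    by (metis matrix_vector_mult_scaleR scaleR_scaleR)
  then have "(l*l) *\<^sub>R v = (trace M * l - det M) *\<^sub>R v"
    using CH[of M v] assms by (simp add: algebra_simps)
  then have "l*l = trace M * l - det M" using assms(1) by (metis scaleR_cancel_right)
  then show ?thesis by (simp add: power2_eq_square)
qed

lemma eig_trace: fixes M :: mat2 assumes "v \<noteq> 0" "M *v v = l *\<^sub>R v" "det M = 1"
  shows "trace M = l + 1/l" "l \<noteq> 0"
proof -
  have q: "l^2 - trace M * l + 1 = 0" using eig_quad assms by force
  then show "l \<noteq> 0" by auto
  then show "trace M = l + 1/l" using q by (simp add: field_simps power2_eq_square)
qed

lemma eig_exists: fixes M :: mat2 assumes "l^2 - trace M * l + det M = 0" "M \<noteq> l *\<^sub>R mat 1"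
  shows "\<exists>v. v \<noteq> 0 \<and> M *v v = l *\<^sub>R v"
proof -
  let ?a = "M$1$1" and ?b = "M$1$2" and ?c = "M$2$1" and ?d = "M$2$2"
  have nz: "?b \<noteq> 0 \<or> l \<noteq> ?a \<or> l \<noteq> ?d \<or> ?c \<noteq> 0"
  proof (rule ccontr)
    assume "\<not> ?thesis"
    then have "M = l *\<^sub>R mat 1"
      by (auto simp: vec_eq_iff forall_2 mat_def)
    then show False using assms(2) by simp
  qed
  have e: "l^2 = (?a + ?d) * l - (?a * ?d - ?b * ?c)" using assms(1) by (simp add: tr2 det_2)
  show ?thesis
  proof (cases "?b \<noteq> 0 \<or> l \<noteq> ?a")
    case True
    let ?v = "(\<chi> i. if i = 1 then ?b else l - ?a) :: real^2"
    have "?v \<noteq> 0" using True by (auto simp: vec2_nz)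
    moreover have "M *v ?v = l *\<^sub>R ?v"
      using e by (simp add: vec2_eq mv1 mv2 algebra_simps power2_eq_square)
    ultimately show ?thesis by blast
  next
    case False
    then have F: "l \<noteq> ?d \<or> ?c \<noteq> 0" using nz by auto
    let ?v = "(\<chi> i. if i = 1 then l - ?d else ?c) :: real^2"
    have "?v \<noteq> 0" using F by (auto simp: vec2_nz)
    moreover have "M *v ?v = l *\<^sub>R ?v"
      using e by (simp add: vec2_eq mv1 mv2 algebra_simps power2_eq_square)
    ultimately show ?thesis by blast
  qed
qed

lemma eig_unique: fixes M :: mat2 assumes "u \<noteq> 0" "v \<noteq> 0" "M *v u = l *\<^sub>R u" "M *v v = l *\<^sub>R v"
  "M \<noteq> l *\<^sub>R mat 1" shows "D u v = 0"
proof (rule ccontr)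
  assume nd: "D u v \<noteq> 0"
  let ?a = "M$1$1" and ?b = "M$1$2" and ?c = "M$2$1" and ?d = "M$2$2"
  have h: "?a * u$1 + ?b * u$2 = l * u$1" "?c * u$1 + ?d * u$2 = l * u$2"
    "?a * v$1 + ?b * v$2 = l * v$1" "?c * v$1 + ?d * v$2 = l * v$2"
    using assms(3,4) by (simp_all add: vec2_eq mv1 mv2)
  have "(?a - l) * D u v = 0" "?b * D u v = 0" "?c * D u v = 0" "(?d - l) * D u v = 0"
    unfolding D_def using h by algebra+
  then have "?a = l" "?b = 0" "?c = 0" "?d = l" using nd by auto
  then have "M = l *\<^sub>R mat 1" by (auto simp: vec_eq_iff forall_2 mat_def)
  then show False using assms(5) by simp
qed

lemma scal_mat: "det ((l::real) *\<^sub>R mat 1 :: mat2) = l^2" "trace ((l::real) *\<^sub>R mat 1 :: mat2) = 2*l"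
  by (simp_all add: det_2 tr2 mat_def power2_eq_square)

lemma mv_nz: fixes M :: mat2 assumes "det M \<noteq> 0" "x \<noteq> 0" shows "M *v x \<noteq> 0"
proof
  assume "M *v x = 0"
  then have h: "M$1$1 * x$1 + M$1$2 * x$2 = 0" "M$2$1 * x$1 + M$2$2 * x$2 = 0"
    by (simp_all add: vec2_eq mv1 mv2)
  have "det M * x$1 = 0" "det M * x$2 = 0" unfolding det_2 using h by algebra+
  then show False using assms by (auto simp: vec2_nz)
qed

lemma roots2: fixes l m :: real assumes "l^2 - (m + 1/m) * l + 1 = 0" "m \<noteq> 0" shows "l = m \<or> l = 1/m"
proof -
  have "(l - m) * (l - 1/m) = l^2 - (m + 1/m) * l + 1" using assms(2) by (simp add: field_simps power2_eq_square)
  then have "(l - m) * (l - 1/m) = 0" using assms(1) by simp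
  then show ?thesis by auto
qed

lemma mobius_pt_of: assumes "x \<noteq> 0" shows "mobius M (pt_of x) = pt_of (M *v x)"
proof -
  obtain c where c: "c \<noteq> 0" "vec_of (pt_of x) = c *\<^sub>R x" using vec_of_pt_of assms by blast
  have "pt_of (c *\<^sub>R y) = pt_of y" for y :: "real^2"
    using c(1) by (auto simp: pt_of_def)
  then show ?thesis unfolding mobius_def c(2) by (simp add: matrix_vector_mult_scaleR)
qed

lemma hyp:
  fixes M :: mat2
  assumes "det M = 1" "trace M > 2"
  shows "\<exists>l u v. l > 1 \<and> u \<noteq> 0 \<and> v \<noteq> 0 \<and> M *v u = l *\<^sub>R u \<and> M *v v = (1/l) *\<^sub>R v \<and>
     fp_plus M = pt_of u \<and> fp_minus M = pt_of v \<and> trace M = l + 1/l"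
proof -
  define T where "T = trace M"
  define s where "s = sqrt (T^2 - 4)"
  define l where "l = (T + s) / 2"
  have T2: "T > 2" using assms T_def by simp
  have "0 < (T-2)*(T+2)" using T2 by simp
  then have T4: "0 < T^2 - 4" by (simp add: algebra_simps power2_eq_square)
  have s0: "s \<ge> 0" and s2: "s^2 = T^2 - 4" using T4 unfolding s_def
    by auto
  have l1: "l > 1" using T2 s0 unfolding l_def by simp
  have inv: "1/l = (T - s)/2" using l1 s2 unfolding l_def by (simp add: field_simps power2_eq_square)
  have Tl: "T = l + 1/l" unfolding inv by (simp add: l_def field_simps)
  have il: "0 < 1/l" "1/l < 1" using l1 by auto
  have q1: "l^2 - trace M * l + det M = 0" using assms(1) Tl l1 unfolding T_def[symmetric]
    by (simp add: field_simps power2_eq_square)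
  have q2: "(1/l)^2 - trace M * (1/l) + det M = 0" using assms(1) Tl l1 unfolding T_def[symmetric]
    by (simp add: field_simps power2_eq_square)
  have L2: "1 < l^2" using l1 by (simp add: one_less_power)
  have ns1: "M \<noteq> l *\<^sub>R mat 1"
  proof
    assume "M = l *\<^sub>R mat 1"
    then have "l^2 = 1" using scal_mat(1)[of l] assms(1) by simp
    then show False using L2 by simp
  qed
  have ns2: "M \<noteq> (1/l) *\<^sub>R mat 1"
  proof
    assume "M = (1/l) *\<^sub>R mat 1"
    then have "(1/l)^2 = 1" using scal_mat(1)[of "1/l"] assms(1) by simp
    then have "l^2 = 1" by (simp add: power_one_over)
    then show False using L2 by simp
  qed
  obtain u where u: "u \<noteq> 0" "M *v u = l *\<^sub>R u" using eig_exists[OF q1 ns1] by blast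
  obtain v where v: "v \<noteq> 0" "M *v v = (1/l) *\<^sub>R v" using eig_exists[OF q2 ns2] by blast
  have ev: "l' = l \<or> l' = 1/l" if "v' \<noteq> 0" "M *v v' = l' *\<^sub>R v'" for v' l'
    using roots2[of l' l] eig_quad[OF that] assms(1) Tl l1 unfolding T_def by auto
  have "fp_plus M = (THE p. \<exists>v l. v \<noteq> 0 \<and> M *v v = l *\<^sub>R v \<and> \<bar>l\<bar> > 1 \<and> p = pt_of v)"
    unfolding fp_plus_def using assms(2) by simp
  also have "\<dots> = pt_of u"
  proof (rule the_equality)
    show "\<exists>v la. v \<noteq> 0 \<and> M *v v = la *\<^sub>R v \<and> 1 < \<bar>la\<bar> \<and> pt_of u = pt_of v"
      using u l1 by (intro exI[of _ u] exI[of _ l]) auto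
  next
    fix p assume "\<exists>v la. v \<noteq> 0 \<and> M *v v = la *\<^sub>R v \<and> 1 < \<bar>la\<bar> \<and> p = pt_of v"
    then obtain v' l' where h: "v' \<noteq> 0" "M *v v' = l' *\<^sub>R v'" "1 < \<bar>l'\<bar>" "p = pt_of v'" by blast
    have "l' = l" using ev[OF h(1,2)] h(3) il by auto
    then have "D v' u = 0" using eig_unique[OF h(1) u(1) _ u(2) ns1] h(2) by simp
    then show "p = pt_of u" using pt_of_eq h u by simp
  qed
  finally have fpp: "fp_plus M = pt_of u" .
  have "fp_minus M = (THE p. \<exists>v l. v \<noteq> 0 \<and> M *v v = l *\<^sub>R v \<and> \<bar>l\<bar> < 1 \<and> p = pt_of v)"
    unfolding fp_minus_def using assms(2) by simp
  also have "\<dots> = pt_of v"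
  proof (rule the_equality)
    show "\<exists>va la. va \<noteq> 0 \<and> M *v va = la *\<^sub>R va \<and> \<bar>la\<bar> < 1 \<and> pt_of v = pt_of va"
      using v il by (intro exI[of _ v] exI[of _ "1/l"]) auto
  next
    fix p assume "\<exists>v la. v \<noteq> 0 \<and> M *v v = la *\<^sub>R v \<and> \<bar>la\<bar> < 1 \<and> p = pt_of v"
    then obtain v' l' where h: "v' \<noteq> 0" "M *v v' = l' *\<^sub>R v'" "\<bar>l'\<bar> < 1" "p = pt_of v'" by blast
    have "l' = 1/l" using ev[OF h(1,2)] h(3) l1 by auto
    then have "D v' v = 0" using eig_unique[OF h(1) v(1) _ v(2) ns2] h(2) by simp
    then show "p = pt_of v" using pt_of_eq h v by simp
  qed
  finally have fpm: "fp_minus M = pt_of v" .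
  show ?thesis
    apply (rule exI[of _ l], rule exI[of _ u], rule exI[of _ v])
    using l1 u v fpp fpm Tl T_def by simp
qed

lemma para:
  fixes M :: mat2
  assumes "det M = 1" "trace M = 2" "M \<noteq> mat 1"
  shows "\<exists>u. u \<noteq> 0 \<and> M *v u = u \<and> fp_plus M = pt_of u"
proof -
  have ns: "M \<noteq> 1 *\<^sub>R mat 1" using assms by simp
  have q: "1^2 - trace M * 1 + det M = 0" using assms by simp
  obtain u where u: "u \<noteq> 0" "M *v u = 1 *\<^sub>R u" using eig_exists[OF q ns] by blast
  have "fp_plus M = (THE p. mobius M p = p)" unfolding fp_plus_def using assms(2) by simp
  also have "\<dots> = pt_of u"
  proof (rule the_equality)
    show "mobius M (pt_of u) = pt_of u" using mobius_pt_of[OF u(1)] u by simp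
  next
    fix p assume p: "mobius M p = p"
    let ?x = "vec_of p"
    have x0: "?x \<noteq> 0" by (rule vec_of_nz)
    have y0: "M *v ?x \<noteq> 0" using mv_nz assms(1) x0 by simp
    have "pt_of (M *v ?x) = pt_of ?x" using p unfolding mobius_def pt_of_vec_of .
    then have "D (M *v ?x) ?x = 0" using pt_of_eq x0 y0 by blast
    then obtain k where k: "M *v ?x = k *\<^sub>R ?x" using par x0 by blast
    have "k^2 - 2 * k + 1 = 0" using eig_quad[OF x0 k] assms by simp
    then have "(k - 1)^2 = 0" by (simp add: power2_eq_square algebra_simps)
    then have "k = 1" by simp
    then have "D ?x u = 0" using eig_unique[OF x0 u(1) _ u(2) ns] k by simp
    then show "p = pt_of u" using pt_of_eq x0 u(1) pt_of_vec_of by metis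
  qed
  finally have "fp_plus M = pt_of u" .
  then show ?thesis using u by auto
qed

definition orient :: "pt \<Rightarrow> pt \<Rightarrow> pt \<Rightarrow> real" where
  "orient p z q = D (vec_of p) (vec_of z) * D (vec_of z) (vec_of q) * D (vec_of q) (vec_of p)"

definition O3 :: "real^2 \<Rightarrow> real^2 \<Rightarrow> real^2 \<Rightarrow> real" where
  "O3 x y z = D x y * D y z * D z x"

lemma cc_ends: "p \<in> cc p q" "q \<in> cc p q"
  by (cases p; cases q; auto)+

lemma cc_orient: assumes "z \<in> cc p q" shows "orient p z q \<ge> 0"
  using assms
  by (cases p; cases q; cases z)
     (auto simp: orient_def D_def vec_of_simps zero_le_mult_iff mult_le_0_iff split: if_splits)

lemma D_scale: "D (a *\<^sub>R x) (b *\<^sub>R y) = a * b * D x y"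
  by (simp add: D_def algebra_simps)

lemma D_anti: "D y x = - D x y" by (simp add: D_def)

lemma O3_rev: "O3 z y x = - O3 x y z"
  by (simp add: O3_def D_def algebra_simps)

lemma orient_pt_of: assumes "x \<noteq> 0" "y \<noteq> 0" "z \<noteq> 0"
  shows "\<exists>k>0. orient (pt_of x) (pt_of y) (pt_of z) = k * O3 x y z"
proof -
  obtain a where a: "a \<noteq> 0" "vec_of (pt_of x) = a *\<^sub>R x" using vec_of_pt_of assms(1) by blast
  obtain b where b: "b \<noteq> 0" "vec_of (pt_of y) = b *\<^sub>R y" using vec_of_pt_of assms(2) by blast
  obtain c where c: "c \<noteq> 0" "vec_of (pt_of z) = c *\<^sub>R z" using vec_of_pt_of assms(3) by blast
  have "orient (pt_of x) (pt_of y) (pt_of z) = (a*b*c)^2 * O3 x y z"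
    unfolding orient_def a(2) b(2) c(2) D_scale O3_def by (simp add: power2_eq_square algebra_simps)
  moreover have "(a*b*c)^2 > 0" using a b c by simp
  ultimately show ?thesis by blast
qed

lemma orient_pos: assumes "z \<in> cc p q" "z \<noteq> p" "z \<noteq> q" "p \<noteq> q" shows "orient p z q > 0"
proof -
  have "orient p z q \<noteq> 0" using assms(2-4) D_vec_of unfolding orient_def by (metis mult_eq_0_iff)
  then show ?thesis using cc_orient[OF assms(1)] by simp
qed

lemma key_identity:
  fixes u v :: "real^2" and s t m1 m2 :: real
  shows "O3 u ((s*m1) *\<^sub>R u + (t*m2) *\<^sub>R v) (s *\<^sub>R u + t *\<^sub>R v)
         = - (t^2 * m2 * (m1 - m2)) * O3 u v (s *\<^sub>R u + t *\<^sub>R v)"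
  unfolding O3_def D_def by (simp add: algebra_simps power2_eq_square)

lemma decomp: assumes "D u v \<noteq> 0"
  shows "w = (D w v / D u v) *\<^sub>R u + (D u w / D u v) *\<^sub>R v"
proof -
  have h: "D u v *\<^sub>R w = D w v *\<^sub>R u + D u w *\<^sub>R v" by (simp add: vec2_eq D_def algebra_simps)
  have "w = (1 / D u v) *\<^sub>R (D u v *\<^sub>R w)" using assms by simp
  also have "\<dots> = (D w v / D u v) *\<^sub>R u + (D u w / D u v) *\<^sub>R v"
    unfolding h by (simp add: scaleR_add_right)
  finally show ?thesis .
qed

lemma inv_fail:
  fixes M :: mat2
  assumes u0: "u \<noteq> 0" and v0: "v \<noteq> 0" and Mu: "M *v u = m1 *\<^sub>R u" and Mv: "M *v v = m2 *\<^sub>R v"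
    and m2: "0 < m2" "m2 < m1"
    and QP: "Q \<noteq> pt_of u" and QR: "Q \<noteq> pt_of v"
    and I: "I \<in> {cc (pt_of u) Q, cc Q (pt_of u)}" and inv: "mobius M ` I \<subseteq> I"
  shows "pt_of v \<notin> I"
proof
  assume RI: "pt_of v \<in> I"
  have d: "D u v \<noteq> 0"
  proof
    assume "D u v = 0"
    then obtain k where k: "u = k *\<^sub>R v" using par v0 by blast
    have "M *v u = m2 *\<^sub>R u" unfolding k using Mv by (simp add: matrix_vector_mult_scaleR)
    then have "m1 *\<^sub>R u = m2 *\<^sub>R u" using Mu by simp
    then show False using u0 m2 by simp
  qed
  have PR: "pt_of u \<noteq> pt_of v" using d pt_of_eq u0 v0 by simp
  define w where "w = vec_of Q"
  have w0: "w \<noteq> 0" unfolding w_def by (rule vec_of_nz)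
  have Qw: "Q = pt_of w" unfolding w_def by (simp add: pt_of_vec_of)
  define s where "s = D w v / D u v"
  define t where "t = D u w / D u v"
  have wd: "w = s *\<^sub>R u + t *\<^sub>R v" unfolding s_def t_def by (rule decomp[OF d])
  have t0: "t \<noteq> 0"
  proof
    assume "t = 0"
    then have "D u w = 0" unfolding t_def using d by simp
    then have "pt_of u = Q" using pt_of_eq u0 w0 Qw by simp
    then show False using QP by simp
  qed
  define x where "x = M *v w"
  have xd: "x = (s*m1) *\<^sub>R u + (t*m2) *\<^sub>R v"
    unfolding x_def wd by (simp add: matrix_vector_right_distrib matrix_vector_mult_scaleR Mu Mv)
  have id: "O3 u x w = - (t^2 * m2 * (m1 - m2)) * O3 u v w"
  proof -
    have "O3 u ((s*m1) *\<^sub>R u + (t*m2) *\<^sub>R v) (s *\<^sub>R u + t *\<^sub>R v)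
         = - (t^2 * m2 * (m1 - m2)) * O3 u v (s *\<^sub>R u + t *\<^sub>R v)" by (rule key_identity)
    then show ?thesis using xd wd by simp
  qed
  have c: "t^2 * m2 * (m1 - m2) > 0" using t0 m2 by simp
  have MQ: "mobius M Q = pt_of x" unfolding mobius_def x_def w_def ..
  have QI: "Q \<in> I" using I cc_ends by auto
  then have "mobius M Q \<in> mobius M ` I" by (rule imageI)
  then have "mobius M Q \<in> I" using inv by (rule rev_subsetD)
  then have MQI: "pt_of x \<in> I" unfolding MQ .
  show False
  proof (cases "I = cc (pt_of u) Q")
    case True
    have RI': "pt_of v \<in> cc (pt_of u) Q" using RI True by simp
    have "orient (pt_of u) (pt_of v) Q > 0"
      using orient_pos[OF RI'] PR QR QP by metis
    then have "orient (pt_of u) (pt_of v) (pt_of w) > 0" using Qw by simp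
    moreover obtain k where "k > 0" "orient (pt_of u) (pt_of v) (pt_of w) = k * O3 u v w"
      using orient_pt_of[OF u0 v0 w0] by blast
    ultimately have "O3 u v w > 0" by (simp add: zero_less_mult_iff)
    then have neg: "O3 u x w < 0" using id c by (simp add: mult_pos_pos)
    then have x0: "x \<noteq> 0" by (auto simp: O3_def D_def)
    have "orient (pt_of u) (pt_of x) Q \<ge> 0" using cc_orient MQI True by simp
    then have "orient (pt_of u) (pt_of x) (pt_of w) \<ge> 0" using Qw by simp
    moreover obtain k where "k > 0" "orient (pt_of u) (pt_of x) (pt_of w) = k * O3 u x w"
      using orient_pt_of[OF u0 x0 w0] by blast
    ultimately have "O3 u x w \<ge> 0" by (simp add: zero_le_mult_iff)
    then show False using neg by simp
  next
    case False
    then have T: "I = cc Q (pt_of u)" using I by auto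
    have RI': "pt_of v \<in> cc Q (pt_of u)" using RI T by simp
    have "orient Q (pt_of v) (pt_of u) > 0"
      using orient_pos[OF RI'] PR QR QP by metis
    then have "orient (pt_of w) (pt_of v) (pt_of u) > 0" using Qw by simp
    moreover obtain k where "k > 0" "orient (pt_of w) (pt_of v) (pt_of u) = k * O3 w v u"
      using orient_pt_of[OF w0 v0 u0] by blast
    ultimately have "O3 w v u > 0" by (simp add: zero_less_mult_iff)
    then have "O3 u v w < 0" using O3_rev[of w v u] by simp
    then have pos: "O3 u x w > 0" using id mult_pos_neg[OF c] by simp
    then have neg: "O3 w x u < 0" using O3_rev[of u x w] by simp
    then have x0: "x \<noteq> 0" by (auto simp: O3_def D_def)
    have "orient Q (pt_of x) (pt_of u) \<ge> 0" using cc_orient MQI T by simp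
    then have "orient (pt_of w) (pt_of x) (pt_of u) \<ge> 0" using Qw by simp
    moreover obtain k where "k > 0" "orient (pt_of w) (pt_of x) (pt_of u) = k * O3 w x u"
      using orient_pt_of[OF w0 x0 u0] by blast
    ultimately have "O3 w x u \<ge> 0" by (simp add: zero_le_mult_iff)
    then show False using neg by simp
  qed
qed

lemma cc_mem:
  "Fin z \<in> cc (Fin x) (Fin y) \<longleftrightarrow> (if x \<le> y then x \<le> z \<and> z \<le> y else x \<le> z \<or> z \<le> y)"
  "Infty \<in> cc (Fin x) (Fin y) \<longleftrightarrow> y < x"
  "Fin z \<in> cc (Fin x) Infty \<longleftrightarrow> x \<le> z"
  "Infty \<in> cc (Fin x) Infty"
  "Fin z \<in> cc Infty (Fin y) \<longleftrightarrow> z \<le> y"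
  "Infty \<in> cc Infty (Fin y)"
  "Fin z \<notin> cc Infty Infty"
  "Infty \<in> cc Infty Infty"
  by auto

lemma arc1: "r \<noteq> p \<Longrightarrow> r \<noteq> q \<Longrightarrow> p \<noteq> q \<Longrightarrow> p \<notin> A \<Longrightarrow> q \<notin> B \<Longrightarrow> z \<in> A \<Longrightarrow> z \<in> B \<Longrightarrow>
   A = cc r q \<or> A = cc q r \<Longrightarrow> B = cc p r \<or> B = cc r p \<Longrightarrow> z = r"
  apply (elim disjE; hypsubst)
  apply (cases r; cases p; cases q; cases z; simp only: cc_mem pt.inject pt.distinct simp_thms split: if_splits; linarith)+
  done


lemma arcs:
  assumes "r \<noteq> p" "r \<noteq> q" "p \<noteq> q"
    "I1 \<in> {cc r q, cc q r}" "p \<notin> I1" "I2 \<in> {cc p r, cc r p}" "q \<notin> I2"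
  shows "I1 \<inter> I2 = {r}"
proof
  show "I1 \<inter> I2 \<subseteq> {r}" using arc1[OF assms(1-3) assms(5) assms(7)] assms(4,6) by blast
  show "{r} \<subseteq> I1 \<inter> I2" using assms(4,6) cc_ends by auto
qed

definition cnt :: "letter \<Rightarrow> letter list \<Rightarrow> nat" where
  "cnt x w = length (filter (\<lambda>y. y = x) w)"

definition Lf :: "real \<Rightarrow> real \<Rightarrow> letter list \<Rightarrow> real" where
  "Lf a b w = real (cnt La w) * a + real (cnt Lb w) * b"

lemma cnt_simps[simp]: "cnt x [] = 0" "cnt x (y # w) = (if y = x then Suc (cnt x w) else cnt x w)"
  "cnt x (w @ v) = cnt x w + cnt x v"
  by (simp_all add: cnt_def)

lemma len_cnt: "length w = cnt La w + cnt Lb w"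
  by (induction w) (auto split: letter.splits, metis letter.exhaust)

lemma wpow_Suc: "wpow w (Suc n) = w @ wpow w n" by (simp add: wpow_def)
lemma wpow_0: "wpow w 0 = []" by (simp add: wpow_def)
lemma length_wpow: "length (wpow w n) = n * length w" by (simp add: wpow_def length_concat sum_list_replicate)
lemma cnt_wpow: "cnt x (wpow w n) = n * cnt x w" by (induction n) (simp_all add: wpow_Suc wpow_0)
lemma Lf_wpow: "Lf a b (wpow w n) = real n * Lf a b w" by (simp add: Lf_def cnt_wpow algebra_simps)
lemma wpow_single: "wpow [x] n = replicate n x" by (induction n) (simp_all add: wpow_Suc wpow_0)

lemma phi_Cons: "phi A B (x # w) = gmat A B x ** phi A B w" by (simp add: phi_def)
lemma phi_Nil: "phi A B [] = mat 1" by (simp add: phi_def)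

lemma phi_eig: assumes "A *v e = al *\<^sub>R e" "B *v e = be *\<^sub>R e"
  shows "phi A B w *v e = (al ^ cnt La w * be ^ cnt Lb w) *\<^sub>R e"
proof (induction w)
  case Nil then show ?case by (simp add: phi_Nil)
next
  case (Cons x w)
  have "phi A B (x # w) *v e = gmat A B x *v (phi A B w *v e)"
    by (simp add: phi_Cons matrix_vector_mul_assoc)
  also have "\<dots> = (al ^ cnt La w * be ^ cnt Lb w) *\<^sub>R (gmat A B x *v e)"
    by (simp add: Cons matrix_vector_mult_scaleR)
  finally show ?case using assms by (cases x) (simp_all add: gmat_def)
qed

lemma det_phi: assumes "det A = 1" "det B = 1" shows "det (phi A B w) = 1"
  by (induction w) (simp_all add: phi_Nil phi_Cons det_mul gmat_def assms split: letter.splits)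

lemma tr_cosh: fixes M :: mat2 assumes "v \<noteq> 0" "M *v v = l *\<^sub>R v" "det M = 1" "l > 0"
  shows "trace M = 2 * cosh (ln l)"
proof -
  have "trace M = l + 1/l" using eig_trace assms by blast
  moreover have "2 * cosh (ln l) = l + 1/l" using assms(4)
    by (simp add: cosh_ln_real inverse_eq_divide)
  ultimately show ?thesis by simp
qed

lemma wtr_cosh:
  assumes "e \<noteq> 0" "A *v e = al *\<^sub>R e" "B *v e = be *\<^sub>R e" "al > 0" "be > 0" "det A = 1" "det B = 1"
  shows "wtr A B w = 2 * cosh (Lf (ln al) (ln be) w)"
proof -
  have t: "al ^ cnt La w * be ^ cnt Lb w > 0" using assms by simp
  have "wtr A B w = 2 * cosh (ln (al ^ cnt La w * be ^ cnt Lb w))"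
    unfolding wtr_def using tr_cosh[OF assms(1) phi_eig[OF assms(2,3)] det_phi[OF assms(6,7)] t] .
  also have "ln (al ^ cnt La w * be ^ cnt Lb w) = Lf (ln al) (ln be) w"
    using assms(4,5) by (simp add: Lf_def ln_mult ln_realpow)
  finally show ?thesis .
qed

lemma cosh_le_iff: "cosh (x::real) \<le> cosh y \<longleftrightarrow> \<bar>x\<bar> \<le> \<bar>y\<bar>"
  by (metis abs_ge_zero cosh_real_abs cosh_real_nonneg_le_iff)

lemma wle_iff:
  assumes "e \<noteq> 0" "A *v e = al *\<^sub>R e" "B *v e = be *\<^sub>R e" "al > 0" "be > 0" "det A = 1" "det B = 1"
  shows "wle A B u w \<longleftrightarrow> real (length w) * \<bar>Lf (ln al) (ln be) u\<bar> \<le> real (length u) * \<bar>Lf (ln al) (ln be) w\<bar>"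
  unfolding wle_def wtr_cosh[OF assms] Lf_wpow by (simp add: cosh_le_iff abs_mult)

lemma wpow_Suc': "wpow w (Suc n) = w @ wpow w n" by (simp add: wpow_def)
lemma length_wpow': "length (wpow w n) = n * length w" by (simp add: wpow_def length_concat sum_list_replicate)

lemma nth_wpow: "i < n * length v \<Longrightarrow> wpow v n ! i = v ! (i mod length v)"
proof (induction n arbitrary: i)
  case 0 then show ?case by simp
next
  case (Suc n)
  show ?case
  proof (cases "i < length v")
    case True then show ?thesis by (simp add: wpow_Suc' nth_append)
  next
    case False
    then have "i - length v < n * length v" using Suc.prems by auto
    then have "wpow v n ! (i - length v) = v ! ((i - length v) mod length v)" using Suc.IH by blast
    moreover have "(i - length v) mod length v = i mod length v" using False
      by (simp add: le_mod_geq)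
    ultimately show ?thesis using False by (simp add: wpow_Suc' nth_append)
  qed
qed

lemma lex_min:
  assumes "finite S" "S \<noteq> {}"
  shows "\<exists>m\<in>S. \<forall>x\<in>S. (x, m) \<notin> lexord letter_less"
  using assms
proof (induction S rule: finite_ne_induct)
  case (singleton x)
  have "(x, x) \<notin> lexord letter_less" by (rule lexord_irreflexive) (simp add: letter_less_def)
  then show ?case by auto
next
  case (insert x F)
  obtain m where m: "m \<in> F" "\<forall>y\<in>F. (y, m) \<notin> lexord letter_less" using insert.IH by blast
  have tr: "trans letter_less" by (simp add: letter_less_def trans_def)
  have irr: "(y, y) \<notin> lexord letter_less" for y by (rule lexord_irreflexive) (simp add: letter_less_def)
  show ?case
  proof (cases "(x, m) \<in> lexord letter_less")
    case True
    have "\<forall>y\<in>insert x F. (y, x) \<notin> lexord letter_less"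
    proof
      fix y assume "y \<in> insert x F"
      then show "(y, x) \<notin> lexord letter_less"
      proof
        assume "y = x" then show ?thesis using irr by simp
      next
        assume yF: "y \<in> F"
        show ?thesis
        proof
          assume "(y, x) \<in> lexord letter_less"
          then have "(y, m) \<in> lexord letter_less" using True lexord_trans tr by blast
          then show False using m yF by blast
        qed
      qed
    qed
    then show ?thesis by blast
  next
    case False
    then show ?thesis using m by blast
  qed
qed

lemma rot_mult: "rotate d w = w \<Longrightarrow> rotate (k * d) w = w"
proof (induction k)
  case 0 then show ?case by simp
next
  case (Suc k)
  have "rotate (Suc k * d) w = rotate d (rotate (k * d) w)" by (simp add: rotate_rotate add.commute)
  then show ?case using Suc by simp
qed

lemma lyndon_fact:
  assumes "w \<noteq> []"
  shows "\<exists>v k n. lyndon v \<and> n \<ge> 1 \<and> w = wpow (rotate k v) n"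
proof -
  define N where "N = length w"
  have N0: "N > 0" using assms N_def by simp
  have rN: "rotate N w = w" unfolding N_def by (simp add: rotate_id)
  define P where "P = (\<lambda>k. 0 < k \<and> rotate k w = w)"
  have PN: "P N" using N0 rN P_def by simp
  define d where "d = (LEAST k. P k)"
  have Pd: "P d" unfolding d_def using PN by (rule LeastI)
  have dN: "d \<le> N" unfolding d_def using PN by (rule Least_le)
  have dmin: "\<not> P j" if "j < d" for j using not_less_Least[OF that[unfolded d_def]] unfolding d_def .
  have d0: "0 < d" and rd: "rotate d w = w" using Pd P_def by auto
  have ddvd: "d dvd N"
  proof -
    obtain x y where xy: "d * x = N * y + gcd d N" using bezout_nat[of d N] d0 by auto
    have "rotate (x * d) w = w" using rot_mult[OF rd] .
    moreover have "rotate (y * N) w = w" using rot_mult[OF rN] .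
    moreover have "rotate (x * d) w = rotate (gcd d N) (rotate (y * N) w)"
      using xy by (simp add: rotate_rotate mult.commute add.commute)
    ultimately have g: "rotate (gcd d N) w = w" by simp
    have "gcd d N > 0" using d0 by simp
    moreover have "gcd d N \<le> d" using d0 by (simp add: gcd_le1_nat)
    ultimately have "gcd d N = d" using dmin g P_def by (meson le_neq_implies_less)
    then show ?thesis by (metis gcd_dvd2)
  qed
  define v where "v = take d w"
  have lv: "length v = d" unfolding v_def using dN N_def by simp
  define m where "m = N div d"
  have Nm: "N = m * d" unfolding m_def using ddvd by simp
  have m1: "m \<ge> 1" using Nm N0 by (cases m) auto
  have per: "w ! i = w ! (i mod d)" if "i < N" for i
    using that
  proof (induction i rule: less_induct)
    case (less i)
    show ?case
    proof (cases "i < d")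
      case True then show ?thesis by simp
    next
      case False
      have a: "i - d < N" using less.prems by simp
      have "w ! (i - d) = rotate d w ! (i - d)" using rd by simp
      also have "\<dots> = w ! ((d + (i - d)) mod N)" using a N_def by (simp add: nth_rotate)
      also have "\<dots> = w ! i" using False less.prems by simp
      finally have e: "w ! (i - d) = w ! i" .
      have "w ! (i - d) = w ! ((i - d) mod d)" using less.IH[of "i - d"] a d0 False by simp
      also have "(i - d) mod d = i mod d" using False by (simp add: le_mod_geq)
      finally show ?thesis using e by simp
    qed
  qed
  have wv: "w = wpow v m"
  proof (rule nth_equalityI)
    show "length w = length (wpow v m)" by (simp add: length_wpow' lv Nm N_def[symmetric])
  next
    fix i assume "i < length w"
    then have i: "i < N" using N_def by simp
    have "wpow v m ! i = v ! (i mod d)" using nth_wpow[of i m v] i Nm lv by simp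
    also have "\<dots> = w ! (i mod d)" unfolding v_def using d0 by simp
    finally show "w ! i = wpow v m ! i" using per[OF i] by simp
  qed
  have prim: "rotate j v \<noteq> v" if "0 < j" "j < d" for j
  proof
    assume rj: "rotate j v = v"
    have "rotate j w = w"
    proof (rule nth_equalityI)
      show "length (rotate j w) = length w" by simp
    next
      fix i assume "i < length (rotate j w)"
      then have i: "i < N" using N_def by simp
      have "rotate j w ! i = w ! ((j + i) mod N)" using i N_def by (simp add: nth_rotate)
      also have "\<dots> = w ! ((j + i) mod N mod d)" using per[of "(j + i) mod N"] N0 by simp
      also have "(j + i) mod N mod d = (j + i) mod d" using ddvd by (simp add: mod_mod_cancel)
      finally have e1: "rotate j w ! i = w ! ((j + i) mod d)" .
      have "w ! i = v ! (i mod d)" using per[OF i] d0 unfolding v_def by simp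
      also have "\<dots> = rotate j v ! (i mod d)" using rj by simp
      also have "\<dots> = v ! ((j + i mod d) mod d)" using d0 lv by (simp add: nth_rotate)
      also have "(j + i mod d) mod d = (j + i) mod d" by (simp add: mod_add_right_eq)
      also have "v ! ((j + i) mod d) = w ! ((j + i) mod d)" using d0 unfolding v_def by simp
      finally show "rotate j w ! i = w ! i" using e1 by simp
    qed
    then show False using dmin[OF that(2)] that(1) P_def by simp
  qed
  have dist: "rotate i v \<noteq> rotate j v" if "i < j" "j < d" for i j
  proof
    assume e: "rotate i v = rotate j v"
    have "rotate (d - i) (rotate i v) = v" using that lv by (simp add: rotate_rotate rotate_id)
    moreover have "rotate (d - i) (rotate j v) = rotate (j - i) v"
    proof -
      have "rotate (d - i) (rotate j v) = rotate (d - i + j) v" by (simp add: rotate_rotate)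
      also have "\<dots> = rotate ((j - i) + d) v" using that by (simp add: algebra_simps)
      also have "\<dots> = rotate (j - i) v" by (metis lv rotate_conv_mod mod_add_self2)
      finally show ?thesis .
    qed
    ultimately have "rotate (j - i) v = v" using e by simp
    then show False using prim[of "j - i"] that by simp
  qed
  define S where "S = (\<lambda>k. rotate k v) ` {..<d}"
  have "finite S" "S \<noteq> {}" using d0 S_def by auto
  then obtain L where L: "L \<in> S" "\<forall>x\<in>S. (x, L) \<notin> lexord letter_less" using lex_min by blast
  then obtain m0 where m0: "m0 < d" "L = rotate m0 v" using S_def by auto
  have lyn: "lyndon L"
    unfolding lyndon_def
  proof (intro conjI allI impI)
    show "L \<noteq> []" using m0 lv d0 by auto
  next
    fix k assume k: "0 < k \<and> k < length L"
    then have kd: "0 < k" "k < d" using m0 lv by auto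
    have rk: "rotate k L = rotate ((k + m0) mod d) v"
      using m0 by (metis lv rotate_conv_mod rotate_rotate)
    have ne: "(k + m0) mod d \<noteq> m0"
    proof
      assume h: "(k + m0) mod d = m0"
      show False
      proof (cases "k + m0 < d")
        case True then show False using h kd by simp
      next
        case False
        then have "(k + m0) mod d = k + m0 - d" using kd m0 by (simp add: le_mod_geq)
        then show False using h kd by simp
      qed
    qed
    have "rotate ((k + m0) mod d) v \<noteq> rotate m0 v"
      using dist ne m0(1) d0 by (metis linorder_neqE_nat mod_less_divisor)
    then have neq: "rotate k L \<noteq> L" using rk m0 by simp
    have "rotate k L \<in> S" using rk S_def d0 by auto
    then have "(rotate k L, L) \<notin> lexord letter_less" using L by blast
    moreover have "\<forall>a b. (a, b) \<in> letter_less \<or> a = b \<or> (b, a) \<in> letter_less"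
      by (auto simp: letter_less_def intro: letter.exhaust) (metis letter.exhaust)+
    ultimately show "(L, rotate k L) \<in> lexord letter_less" using neq lexord_linear by blast
  qed
  have "rotate (d - m0) L = v" using m0 lv by (simp add: rotate_rotate rotate_id)
  then show ?thesis using lyn m1 wv by blast
qed

lemma Lf_bound: "\<bar>Lf a b w\<bar> \<le> real (cnt La w) * \<bar>a\<bar> + real (cnt Lb w) * \<bar>b\<bar>"
  unfolding Lf_def by (metis abs_mult abs_of_nat abs_triangle_ineq)

lemma Lf_single: "Lf a b [La] = a" "Lf a b [Lb] = b" by (simp_all add: Lf_def)

lemma cnt0: "cnt x w = 0 \<Longrightarrow> \<forall>y\<in>set w. y \<noteq> x"
  by (simp add: cnt_def filter_empty_conv)

lemma other: "y \<noteq> La \<Longrightarrow> y = Lb" "y \<noteq> Lb \<Longrightarrow> y = La" by (cases y; simp)+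

lemma const_word: assumes "w \<noteq> []" "cnt x w = 0" "y \<noteq> x"
  shows "w = wpow (rotate 0 [y]) (length w)" "length w \<ge> 1"
proof -
  have "\<forall>z\<in>set w. z = y" using cnt0[OF assms(2)] assms(3) by (metis letter.exhaust)
  then show "w = wpow (rotate 0 [y]) (length w)" by (simp add: wpow_single replicate_length_same)
  show "length w \<ge> 1" using assms(1) by (cases w) auto
qed

lemma lyndon_single: "lyndon [x]" by (simp add: lyndon_def)

locale wl =
  fixes A B :: mat2 and a b :: real
  assumes H: "\<And>u w. wle A B u w \<longleftrightarrow> real (length w) * \<bar>Lf a b u\<bar> \<le> real (length u) * \<bar>Lf a b w\<bar>"
begin

lemma W1: assumes "\<bar>a\<bar> > \<bar>b\<bar>" shows "complete_optimal A B {[La]}"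
proof -
  have bnd: "\<bar>Lf a b u\<bar> \<le> real (length u) * \<bar>a\<bar>" for u
  proof -
    have "\<bar>Lf a b u\<bar> \<le> real (cnt La u) * \<bar>a\<bar> + real (cnt Lb u) * \<bar>b\<bar>" by (rule Lf_bound)
    also have "\<dots> \<le> real (cnt La u) * \<bar>a\<bar> + real (cnt Lb u) * \<bar>a\<bar>"
      using assms by (simp add: mult_left_mono)
    also have "\<dots> = real (length u) * \<bar>a\<bar>" by (simp add: len_cnt algebra_simps)
    finally show ?thesis .
  qed
  have mx: "maximal A B [La]" unfolding maximal_def using bnd by (simp add: H Lf_single)
  have "\<exists>v\<in>{[La]}. \<exists>k n. n \<ge> 1 \<and> w = wpow (rotate k v) n" if "maximal A B w" for w
  proof -
    have w0: "w \<noteq> []" using that maximal_def by blast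
    have "wle A B [La] w" using that maximal_def by blast
    then have "real (length w) * \<bar>a\<bar> \<le> \<bar>Lf a b w\<bar>" by (simp add: H Lf_single)
    also have "\<dots> \<le> real (cnt La w) * \<bar>a\<bar> + real (cnt Lb w) * \<bar>b\<bar>" by (rule Lf_bound)
    finally have "real (cnt Lb w) * (\<bar>a\<bar> - \<bar>b\<bar>) \<le> 0" by (simp add: len_cnt algebra_simps)
    then have "cnt Lb w = 0" using assms by (simp add: mult_le_0_iff)
    then show ?thesis using const_word[OF w0, of Lb La] by blast
  qed
  then show ?thesis unfolding complete_optimal_def using mx lyndon_single by blast
qed

lemma W2: assumes "\<bar>b\<bar> > \<bar>a\<bar>" shows "complete_optimal A B {[Lb]}"
proof -
  have bnd: "\<bar>Lf a b u\<bar> \<le> real (length u) * \<bar>b\<bar>" for u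
  proof -
    have "\<bar>Lf a b u\<bar> \<le> real (cnt La u) * \<bar>a\<bar> + real (cnt Lb u) * \<bar>b\<bar>" by (rule Lf_bound)
    also have "\<dots> \<le> real (cnt La u) * \<bar>b\<bar> + real (cnt Lb u) * \<bar>b\<bar>"
      using assms by (simp add: mult_left_mono)
    also have "\<dots> = real (length u) * \<bar>b\<bar>" by (simp add: len_cnt algebra_simps)
    finally show ?thesis .
  qed
  have mx: "maximal A B [Lb]" unfolding maximal_def using bnd by (simp add: H Lf_single)
  have "\<exists>v\<in>{[Lb]}. \<exists>k n. n \<ge> 1 \<and> w = wpow (rotate k v) n" if "maximal A B w" for w
  proof -
    have w0: "w \<noteq> []" using that maximal_def by blast
    have "wle A B [Lb] w" using that maximal_def by blast
    then have "real (length w) * \<bar>b\<bar> \<le> \<bar>Lf a b w\<bar>" by (simp add: H Lf_single)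
    also have "\<dots> \<le> real (cnt La w) * \<bar>a\<bar> + real (cnt Lb w) * \<bar>b\<bar>" by (rule Lf_bound)
    finally have "real (cnt La w) * (\<bar>b\<bar> - \<bar>a\<bar>) \<le> 0" by (simp add: len_cnt algebra_simps)
    then have "cnt La w = 0" using assms by (simp add: mult_le_0_iff)
    then show ?thesis using const_word[OF w0, of La Lb] by blast
  qed
  then show ?thesis unfolding complete_optimal_def using mx lyndon_single by blast
qed

lemma W3: assumes "a = b" shows "(\<forall>w. w \<noteq> [] \<longrightarrow> maximal A B w) \<and> complete_optimal A B {w. lyndon w}"
proof -
  have L: "Lf a b u = real (length u) * a" for u using assms by (simp add: Lf_def len_cnt algebra_simps)
  have all: "\<forall>w. w \<noteq> [] \<longrightarrow> maximal A B w"
    unfolding maximal_def by (simp add: H L abs_mult)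
  moreover have "complete_optimal A B {w. lyndon w}"
    unfolding complete_optimal_def
  proof (rule conjI)
    show "\<forall>w\<in>{w. lyndon w}. lyndon w \<and> maximal A B w" using all lyndon_def by auto
    show "\<forall>w. maximal A B w \<longrightarrow> (\<exists>v\<in>{w. lyndon w}. \<exists>k n. n \<ge> 1 \<and> w = wpow (rotate k v) n)"
    proof (intro allI impI)
      fix w assume "maximal A B w"
      then have "w \<noteq> []" using maximal_def by blast
      then show "\<exists>v\<in>{w. lyndon w}. \<exists>k n. n \<ge> 1 \<and> w = wpow (rotate k v) n"
        using lyndon_fact by blast
    qed
  qed
  ultimately show ?thesis by blast
qed

lemma W4: assumes "b = - a" "a \<noteq> 0" shows "complete_optimal A B {[La], [Lb]}"
proof -
  have L: "Lf a b u = (real (cnt La u) - real (cnt Lb u)) * a" for u using assms by (simp add: Lf_def algebra_simps)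
  have bnd: "\<bar>Lf a b u\<bar> \<le> real (length u) * \<bar>a\<bar>" for u
    using Lf_bound[of a b u] assms by (simp add: len_cnt algebra_simps)
  have mx1: "maximal A B [La]" unfolding maximal_def using bnd by (simp add: H Lf_single)
  have mx2: "maximal A B [Lb]" unfolding maximal_def using bnd assms by (simp add: H Lf_single)
  have "\<exists>v\<in>{[La], [Lb]}. \<exists>k n. n \<ge> 1 \<and> w = wpow (rotate k v) n" if "maximal A B w" for w
  proof -
    have w0: "w \<noteq> []" using that maximal_def by blast
    have "wle A B [La] w" using that maximal_def by blast
    then have "real (length w) * \<bar>a\<bar> \<le> \<bar>Lf a b w\<bar>" by (simp add: H Lf_single)
    then have "(real (cnt La w) + real (cnt Lb w)) * \<bar>a\<bar> \<le> \<bar>real (cnt La w) - real (cnt Lb w)\<bar> * \<bar>a\<bar>"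
      by (simp add: L len_cnt abs_mult)
    then have "real (cnt La w) + real (cnt Lb w) \<le> \<bar>real (cnt La w) - real (cnt Lb w)\<bar>"
      using assms(2) by simp
    then have "cnt La w = 0 \<or> cnt Lb w = 0" by linarith
    then show ?thesis
    proof
      assume "cnt La w = 0" then show ?thesis using const_word[OF w0, of La Lb] by blast
    next
      assume "cnt Lb w = 0" then show ?thesis using const_word[OF w0, of Lb La] by blast
    qed
  qed
  then show ?thesis unfolding complete_optimal_def using mx1 mx2 lyndon_single by blast
qed

end

lemma common_eig: fixes B :: mat2
  assumes "x \<noteq> 0" "y \<noteq> 0" "pt_of x = pt_of y" "B *v y = be *\<^sub>R y"
  shows "B *v x = be *\<^sub>R x"
proof -
  have "D x y = 0" using pt_of_eq assms by blast
  then obtain k where "x = k *\<^sub>R y" using par assms(2) by blast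
  then show ?thesis using assms(4) by (simp add: matrix_vector_mult_scaleR)
qed

lemma hyp_ne: fixes M :: mat2
  assumes "u \<noteq> 0" "v \<noteq> 0" "M *v u = l *\<^sub>R u" "M *v v = (1/l) *\<^sub>R v" "l > 1"
  shows "pt_of u \<noteq> pt_of v"
proof
  assume "pt_of u = pt_of v"
  then have "M *v u = (1/l) *\<^sub>R u" using common_eig assms by blast
  then have "l *\<^sub>R u = (1/l) *\<^sub>R u" using assms(3) by simp
  then have "l = 1/l" using assms(1) by simp
  then have "l * l = 1" using assms(5) by (simp add: field_simps)
  then show False using less_1_mult[OF assms(5) assms(5)] by simp
qed

lemma inv_eig: fixes M :: mat2
  assumes "det M \<noteq> 0" "M *v x = m *\<^sub>R x" "m \<noteq> 0"
  shows "matrix_inv M *v x = (1/m) *\<^sub>R x"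
proof -
  have "invertible M" using assms(1) invertible_det_nz by blast
  then have "\<exists>A'. M ** A' = mat 1 \<and> A' ** M = mat 1" unfolding invertible_def .
  then have "M ** matrix_inv M = mat 1 \<and> matrix_inv M ** M = mat 1"
    unfolding matrix_inv_def by (rule someI_ex)
  then have "matrix_inv M *v (M *v x) = x" by (simp add: matrix_vector_mul_assoc)
  then have "m *\<^sub>R (matrix_inv M *v x) = x" using assms(2) by (simp add: matrix_vector_mult_scaleR)
  then have "(1/m) *\<^sub>R (m *\<^sub>R (matrix_inv M *v x)) = (1/m) *\<^sub>R x" by simp
  then show ?thesis using assms(3) by simp
qed

lemma I_of_prop:
  assumes "p \<noteq> q" "\<exists>I\<in>{cc p q, cc q p}. invariant2 M N I"
  shows "I_of M N p q \<in> {cc p q, cc q p} \<and> invariant2 M N (I_of M N p q)"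
proof -
  have "\<exists>I. I \<in> {cc p q, cc q p} \<and> invariant2 M N I" using assms(2) by blast
  then have "(SOME I. I \<in> {cc p q, cc q p} \<and> invariant2 M N I) \<in> {cc p q, cc q p} \<and>
     invariant2 M N (SOME I. I \<in> {cc p q, cc q p} \<and> invariant2 M N I)" by (rule someI_ex)
  then show ?thesis unfolding I_of_def using assms(1) by simp
qed

lemma I_of_eq: "I_of M N p p = {p}" by (simp add: I_of_def)

locale S2 =
  fixes A B :: mat2 and lA lB :: real and uA vA uB vB :: "real^2"
  assumes detA: "det A = 1" and detB: "det B = 1" and lA: "lA > 1" and lB: "lB > 1"
    and uA0: "uA \<noteq> 0" and vA0: "vA \<noteq> 0" and uB0: "uB \<noteq> 0" and vB0: "vB \<noteq> 0"
    and AuA: "A *v uA = lA *\<^sub>R uA" and AvA: "A *v vA = (1/lA) *\<^sub>R vA"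
    and BuB: "B *v uB = lB *\<^sub>R uB" and BvB: "B *v vB = (1/lB) *\<^sub>R vB"
    and fpA: "fp_plus A = pt_of uA" and fmA: "fp_minus A = pt_of vA"
    and fpB: "fp_plus B = pt_of uB" and fmB: "fp_minus B = pt_of vB"
begin

lemma AivA: "matrix_inv A *v vA = lA *\<^sub>R vA" using inv_eig[OF _ AvA] detA lA by simp
lemma AiuA: "matrix_inv A *v uA = (1/lA) *\<^sub>R uA" using inv_eig[OF _ AuA] detA lA by simp
lemma BivB: "matrix_inv B *v vB = lB *\<^sub>R vB" using inv_eig[OF _ BvB] detB lB by simp
lemma BiuB: "matrix_inv B *v uB = (1/lB) *\<^sub>R uB" using inv_eig[OF _ BuB] detB lB by simp
lemma neA: "fp_plus A \<noteq> fp_minus A" using hyp_ne[OF uA0 vA0 AuA AvA lA] fpA fmA by simp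
lemma neB: "fp_plus B \<noteq> fp_minus B" using hyp_ne[OF uB0 vB0 BuB BvB lB] fpB fmB by simp
lemma lA': "0 < 1/lA" "1/lA < lA" using lA less_1_mult[OF lA lA] by (auto simp: field_simps)
lemma lB': "0 < 1/lB" "1/lB < lB" using lB less_1_mult[OF lB lB] by (auto simp: field_simps)

lemma invA: "invariant2 A B I \<Longrightarrow> mobius A ` I \<subseteq> I" by (simp add: invariant2_def)
lemma invB: "invariant2 A B I \<Longrightarrow> mobius B ` I \<subseteq> I" by (simp add: invariant2_def)

context
  assumes coh: "coherent A B"
    and sne: "{fp_plus A, fp_minus A} \<noteq> {fp_plus B, fp_minus B}"
begin

lemma cohP: "fp_plus A \<noteq> fp_plus B \<Longrightarrow>
  I_plus A B \<in> {cc (fp_plus A) (fp_plus B), cc (fp_plus B) (fp_plus A)} \<and> invariant2 A B (I_plus A B)"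
  unfolding I_plus_def using coh unfolding coherent_def by (intro I_of_prop) auto

lemma cohM: "fp_minus A \<noteq> fp_minus B \<Longrightarrow>
  I_minus A B \<in> {cc (fp_minus A) (fp_minus B), cc (fp_minus B) (fp_minus A)} \<and>
  invariant2 (matrix_inv A) (matrix_inv B) (I_minus A B)"
  unfolding I_minus_def using coh unfolding coherent_def by (intro I_of_prop) auto

lemma c1: assumes "fp_plus A = fp_plus B" shows "I_plus A B \<inter> I_minus A B = {}"
proof -
  have Ip: "I_plus A B = {fp_plus A}" unfolding I_plus_def using assms by (simp add: I_of_eq)
  have ne: "fp_minus A \<noteq> fp_minus B" using sne assms by auto
  note M = cohM[OF ne]
  have "pt_of uA \<notin> I_minus A B"
  proof (rule inv_fail[OF vA0 uA0 AivA AiuA lA'])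
    show "fp_minus B \<noteq> pt_of vA" using ne fmA by simp
    show "fp_minus B \<noteq> pt_of uA" using neB assms fpA by simp
    show "I_minus A B \<in> {cc (pt_of vA) (fp_minus B), cc (fp_minus B) (pt_of vA)}" using M fmA by simp
    show "mobius (matrix_inv A) ` I_minus A B \<subseteq> I_minus A B" using M by (simp add: invariant2_def)
  qed
  then show ?thesis using Ip fpA by simp
qed

lemma c2: assumes "fp_minus A = fp_minus B" shows "I_plus A B \<inter> I_minus A B = {}"
proof -
  have Im: "I_minus A B = {fp_minus A}" unfolding I_minus_def using assms by (simp add: I_of_eq)
  have ne: "fp_plus A \<noteq> fp_plus B" using sne assms by auto
  note P = cohP[OF ne]
  have "pt_of vA \<notin> I_plus A B"
  proof (rule inv_fail[OF uA0 vA0 AuA AvA lA'])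
    show "fp_plus B \<noteq> pt_of uA" using ne fpA by simp
    show "fp_plus B \<noteq> pt_of vA" using neB assms fmA by simp
    show "I_plus A B \<in> {cc (pt_of uA) (fp_plus B), cc (fp_plus B) (pt_of uA)}" using P fpA by simp
    show "mobius A ` I_plus A B \<subseteq> I_plus A B" using P by (simp add: invariant2_def)
  qed
  then show ?thesis using Im fmA by auto
qed

lemma c3: assumes "fp_plus A = fp_minus B" shows "\<exists>p. I_plus A B \<inter> I_minus A B = {p}"
proof -
  define r where "r = fp_plus A"
  define p where "p = fp_minus A"
  define q where "q = fp_plus B"
  have rp: "r \<noteq> p" using neA r_def p_def by simp
  have rq: "r \<noteq> q" using neB assms r_def q_def by simp
  have pq: "p \<noteq> q" using sne assms p_def q_def by auto
  have ne1: "fp_plus A \<noteq> fp_plus B" using rq r_def q_def by simp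
  have ne2: "fp_minus A \<noteq> fp_minus B" using rp r_def p_def assms by simp
  note P = cohP[OF ne1] and M = cohM[OF ne2]
  have "pt_of vA \<notin> I_plus A B"
  proof (rule inv_fail[OF uA0 vA0 AuA AvA lA'])
    show "fp_plus B \<noteq> pt_of uA" using ne1 fpA by simp
    show "fp_plus B \<noteq> pt_of vA" using pq p_def q_def fmA by simp
    show "I_plus A B \<in> {cc (pt_of uA) (fp_plus B), cc (fp_plus B) (pt_of uA)}" using P fpA by simp
    show "mobius A ` I_plus A B \<subseteq> I_plus A B" using P by (simp add: invariant2_def)
  qed
  then have pI: "p \<notin> I_plus A B" using p_def fmA by simp
  have "pt_of uB \<notin> I_minus A B"
  proof (rule inv_fail[OF vB0 uB0 BivB BiuB lB'])
    show "fp_minus A \<noteq> pt_of vB" using ne2 fmB by simp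
    show "fp_minus A \<noteq> pt_of uB" using pq p_def q_def fpB by simp
    show "I_minus A B \<in> {cc (pt_of vB) (fp_minus A), cc (fp_minus A) (pt_of vB)}" using M fmB by auto
    show "mobius (matrix_inv B) ` I_minus A B \<subseteq> I_minus A B" using M by (simp add: invariant2_def)
  qed
  then have qI: "q \<notin> I_minus A B" using q_def fpB by simp
  have "I_plus A B \<inter> I_minus A B = {r}"
  proof (rule arcs[OF rp rq pq _ pI _ qI])
    show "I_plus A B \<in> {cc r q, cc q r}" using P r_def q_def by simp
    show "I_minus A B \<in> {cc p r, cc r p}" using M r_def p_def assms by simp
  qed
  then show ?thesis by blast
qed

lemma c4: assumes "fp_minus A = fp_plus B" shows "\<exists>p. I_plus A B \<inter> I_minus A B = {p}"
proof -
  define r where "r = fp_minus A"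
  define p where "p = fp_plus A"
  define q where "q = fp_minus B"
  have rp: "r \<noteq> p" using neA r_def p_def by simp
  have rq: "r \<noteq> q" using neB assms r_def q_def by simp
  have pq: "p \<noteq> q" using sne assms p_def q_def by auto
  have ne1: "fp_plus A \<noteq> fp_plus B" using rp r_def p_def assms by simp
  have ne2: "fp_minus A \<noteq> fp_minus B" using rq r_def q_def by simp
  note P = cohP[OF ne1] and M = cohM[OF ne2]
  have "pt_of vB \<notin> I_plus A B"
  proof (rule inv_fail[OF uB0 vB0 BuB BvB lB'])
    show "fp_plus A \<noteq> pt_of uB" using ne1 fpB by simp
    show "fp_plus A \<noteq> pt_of vB" using pq p_def q_def fmB by simp
    show "I_plus A B \<in> {cc (pt_of uB) (fp_plus A), cc (fp_plus A) (pt_of uB)}" using P fpB by auto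
    show "mobius B ` I_plus A B \<subseteq> I_plus A B" using P by (simp add: invariant2_def)
  qed
  then have qI: "q \<notin> I_plus A B" using q_def fmB by simp
  have "pt_of uA \<notin> I_minus A B"
  proof (rule inv_fail[OF vA0 uA0 AivA AiuA lA'])
    show "fp_minus B \<noteq> pt_of vA" using ne2 fmA by simp
    show "fp_minus B \<noteq> pt_of uA" using pq p_def q_def fpA by simp
    show "I_minus A B \<in> {cc (pt_of vA) (fp_minus B), cc (fp_minus B) (pt_of vA)}" using M fmA by simp
    show "mobius (matrix_inv A) ` I_minus A B \<subseteq> I_minus A B" using M by (simp add: invariant2_def)
  qed
  then have pI: "p \<notin> I_minus A B" using p_def fpA by simp
  have "I_minus A B \<inter> I_plus A B = {r}"
  proof (rule arcs[OF rp rq pq _ pI _ qI])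
    show "I_minus A B \<in> {cc r q, cc q r}" using M r_def q_def by simp
    show "I_plus A B \<in> {cc p r, cc r p}" using P r_def p_def assms by simp
  qed
  then show ?thesis by blast
qed

end
end

lemma (in wl) conc:
  assumes tA: "trace A = 2 * cosh a" and tB: "trace B = 2 * cosh b"
    and cs: "(a * b > 0 \<and> X = {}) \<or> (a * b < 0 \<and> (\<exists>p. X = {p}))"
  shows "(trace A \<noteq> trace B \<longrightarrow> complete_optimal A B {if trace A > trace B then [La] else [Lb]}) \<and>
     (trace A = trace B \<and> X = {} \<longrightarrow> (\<forall>w. w \<noteq> [] \<longrightarrow> maximal A B w) \<and> complete_optimal A B {w. lyndon w}) \<and>
     (trace A = trace B \<and> X \<noteq> {} \<longrightarrow> (\<exists>p. X = {p}) \<and> complete_optimal A B {[La], [Lb]})"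
proof -
  have le: "trace A \<le> trace B \<longleftrightarrow> \<bar>a\<bar> \<le> \<bar>b\<bar>" using tA tB cosh_le_iff by simp
  have ge: "trace B \<le> trace A \<longleftrightarrow> \<bar>b\<bar> \<le> \<bar>a\<bar>" using tA tB cosh_le_iff by simp
  have eq: "trace A = trace B \<longleftrightarrow> \<bar>a\<bar> = \<bar>b\<bar>" using le ge by linarith
  have gt: "trace A > trace B \<longleftrightarrow> \<bar>a\<bar> > \<bar>b\<bar>" using le by (metis not_le)
  have lt: "trace A < trace B \<longleftrightarrow> \<bar>a\<bar> < \<bar>b\<bar>" using ge by (metis not_le)
  have C1: "trace A \<noteq> trace B \<longrightarrow> complete_optimal A B {if trace A > trace B then [La] else [Lb]}"
  proof
    assume ne: "trace A \<noteq> trace B"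
    show "complete_optimal A B {if trace A > trace B then [La] else [Lb]}"
    proof (cases "trace A > trace B")
      case True then show ?thesis using W1 gt by simp
    next
      case False
      then have "trace A < trace B" using ne by simp
      then show ?thesis using W2 lt False by simp
    qed
  qed
  have C2: "trace A = trace B \<and> X = {} \<longrightarrow> (\<forall>w. w \<noteq> [] \<longrightarrow> maximal A B w) \<and> complete_optimal A B {w. lyndon w}"
  proof
    assume h: "trace A = trace B \<and> X = {}"
    then have "a * b > 0" using cs by auto
    moreover have "\<bar>a\<bar> = \<bar>b\<bar>" using h eq by simp
    ultimately have "a = b" by (auto simp: zero_less_mult_iff abs_if split: if_splits)
    then show "(\<forall>w. w \<noteq> [] \<longrightarrow> maximal A B w) \<and> complete_optimal A B {w. lyndon w}" using W3 by blast
  qed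
  have C3: "trace A = trace B \<and> X \<noteq> {} \<longrightarrow> (\<exists>p. X = {p}) \<and> complete_optimal A B {[La], [Lb]}"
  proof
    assume h: "trace A = trace B \<and> X \<noteq> {}"
    then have ab: "a * b < 0" and ex: "\<exists>p. X = {p}" using cs by auto
    have "\<bar>a\<bar> = \<bar>b\<bar>" using h eq by simp
    then have "b = - a" "a \<noteq> 0" using ab by (auto simp: mult_less_0_iff abs_if split: if_splits)
    then show "(\<exists>p. X = {p}) \<and> complete_optimal A B {[La], [Lb]}" using W4 ex by blast
  qed
  show ?thesis using C1 C2 C3 by blast
qed

lemma wl_intro:
  assumes "e \<noteq> 0" "A *v e = al *\<^sub>R e" "B *v e = be *\<^sub>R e" "al > 0" "be > 0" "det A = 1" "det B = 1"
  shows "wl A B (ln al) (ln be)"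
  unfolding wl_def using wle_iff[OF assms] by blast

context S2 begin

lemma part1:
  assumes coh: "coherent A B"
    and sne: "{fp_plus A, fp_minus A} \<noteq> {fp_plus B, fp_minus B}"
    and int: "{fp_plus A, fp_minus A} \<inter> {fp_plus B, fp_minus B} \<noteq> {}"
  shows "(trace A \<noteq> trace B \<longrightarrow> complete_optimal A B {if trace A > trace B then [La] else [Lb]}) \<and>
     (trace A = trace B \<and> I_plus A B \<inter> I_minus A B = {} \<longrightarrow>
        (\<forall>w. w \<noteq> [] \<longrightarrow> maximal A B w) \<and> complete_optimal A B {w. lyndon w}) \<and>
     (trace A = trace B \<and> I_plus A B \<inter> I_minus A B \<noteq> {} \<longrightarrow>
        (\<exists>p. I_plus A B \<inter> I_minus A B = {p}) \<and> complete_optimal A B {[La], [Lb]})"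
proof -
  let ?X = "I_plus A B \<inter> I_minus A B"
  have gen: "?thesis" if e: "e \<noteq> 0" "A *v e = al *\<^sub>R e" "B *v e = be *\<^sub>R e" "al > 0" "be > 0"
    and cs: "(ln al * ln be > 0 \<and> ?X = {}) \<or> (ln al * ln be < 0 \<and> (\<exists>p. ?X = {p}))" for e al be
  proof -
    interpret wl A B "ln al" "ln be" by (rule wl_intro[OF e detA detB])
    show ?thesis
      by (rule conc[OF tr_cosh[OF e(1,2) detA e(4)] tr_cosh[OF e(1,3) detB e(5)] cs])
  qed
  have pl: "ln lA > 0" "ln lB > 0" using lA lB by simp_all
  have mi: "ln (1/lA) < 0" "ln (1/lB) < 0" using lA lB by (simp_all add: ln_div)
  have il: "0 < 1/lA" "0 < 1/lB" using lA lB by simp_all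
  have "fp_plus A = fp_plus B \<or> fp_minus A = fp_minus B \<or> fp_plus A = fp_minus B \<or> fp_minus A = fp_plus B"
    using int by auto
  then show ?thesis
  proof (elim disjE)
    assume h: "fp_plus A = fp_plus B"
    have B': "B *v uA = lB *\<^sub>R uA" using common_eig[OF uA0 uB0 _ BuB] h fpA fpB by simp
    show ?thesis
    proof (rule gen[OF uA0 AuA B'])
      show "lA > 0" "lB > 0" using lA lB by simp_all
      show "(ln lA * ln lB > 0 \<and> ?X = {}) \<or> (ln lA * ln lB < 0 \<and> (\<exists>p. ?X = {p}))"
        using pl c1[OF coh sne h] by simp
    qed
  next
    assume h: "fp_minus A = fp_minus B"
    have B': "B *v vA = (1/lB) *\<^sub>R vA" using common_eig[OF vA0 vB0 _ BvB] h fmA fmB by simp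
    show ?thesis
    proof (rule gen[OF vA0 AvA B' il])
      show "(ln (1/lA) * ln (1/lB) > 0 \<and> ?X = {}) \<or> (ln (1/lA) * ln (1/lB) < 0 \<and> (\<exists>p. ?X = {p}))"
        using mi c2[OF coh sne h] by (simp add: mult_neg_neg)
    qed
  next
    assume h: "fp_plus A = fp_minus B"
    have B': "B *v uA = (1/lB) *\<^sub>R uA" using common_eig[OF uA0 vB0 _ BvB] h fpA fmB by simp
    show ?thesis
    proof (rule gen[OF uA0 AuA B' _ il(2)])
      show "lA > 0" using lA by simp
      show "(ln lA * ln (1/lB) > 0 \<and> ?X = {}) \<or> (ln lA * ln (1/lB) < 0 \<and> (\<exists>p. ?X = {p}))"
        using pl mi c3[OF coh sne h] by (simp add: mult_pos_neg)
    qed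
  next
    assume h: "fp_minus A = fp_plus B"
    have B': "B *v vA = lB *\<^sub>R vA" using common_eig[OF vA0 uB0 _ BuB] h fmA fpB by simp
    show ?thesis
    proof (rule gen[OF vA0 AvA B' il(1)])
      show "lB > 0" using lB by simp
      show "(ln (1/lA) * ln lB > 0 \<and> ?X = {}) \<or> (ln (1/lA) * ln lB < 0 \<and> (\<exists>p. ?X = {p}))"
        using pl mi c4[OF coh sne h] by (simp add: mult_neg_pos)
    qed
  qed
qed

end

theorem theorem3p5:
  fixes A B :: mat2
  assumes detA: "det A = 1" and detB: "det B = 1"
    and noncomm: "A ** B \<noteq> B ** A"
    and trA: "trace A \<ge> 2" and trB: "trace B \<ge> 2"
    and coh: "coherent A B"
    and hypB: "trace B > 2"
  shows
    "(trace A > 2 \<and>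
      {fp_plus A, fp_minus A} \<noteq> {fp_plus B, fp_minus B} \<and>
      {fp_plus A, fp_minus A} \<inter> {fp_plus B, fp_minus B} \<noteq> {} \<longrightarrow>
        (trace A \<noteq> trace B \<longrightarrow>
           complete_optimal A B {if trace A > trace B then [La] else [Lb]}) \<and>
        (trace A = trace B \<and> I_plus A B \<inter> I_minus A B = {} \<longrightarrow>
           (\<forall>w. w \<noteq> [] \<longrightarrow> maximal A B w) \<and> complete_optimal A B {w. lyndon w}) \<and>
        (trace A = trace B \<and> I_plus A B \<inter> I_minus A B \<noteq> {} \<longrightarrow>
           (\<exists>p. I_plus A B \<inter> I_minus A B = {p}) \<and> complete_optimal A B {[La], [Lb]}))
     \<and>
     (trace A = 2 \<and> A \<noteq> mat 1 \<and> fp_plus A \<in> {fp_plus B, fp_minus B} \<longrightarrow>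
        complete_optimal A B {[Lb]})"
proof (rule conjI)
  obtain lB uB vB where B: "lB > 1" "uB \<noteq> 0" "vB \<noteq> 0" "B *v uB = lB *\<^sub>R uB" "B *v vB = (1/lB) *\<^sub>R vB"
     "fp_plus B = pt_of uB" "fp_minus B = pt_of vB"
    using hyp[OF detB hypB] by blast
  show "trace A > 2 \<and>
      {fp_plus A, fp_minus A} \<noteq> {fp_plus B, fp_minus B} \<and>
      {fp_plus A, fp_minus A} \<inter> {fp_plus B, fp_minus B} \<noteq> {} \<longrightarrow>
        (trace A \<noteq> trace B \<longrightarrow>
           complete_optimal A B {if trace A > trace B then [La] else [Lb]}) \<and>
        (trace A = trace B \<and> I_plus A B \<inter> I_minus A B = {} \<longrightarrow>
           (\<forall>w. w \<noteq> [] \<longrightarrow> maximal A B w) \<and> complete_optimal A B {w. lyndon w}) \<and>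
        (trace A = trace B \<and> I_plus A B \<inter> I_minus A B \<noteq> {} \<longrightarrow>
           (\<exists>p. I_plus A B \<inter> I_minus A B = {p}) \<and> complete_optimal A B {[La], [Lb]})"
  proof
    assume h: "trace A > 2 \<and> {fp_plus A, fp_minus A} \<noteq> {fp_plus B, fp_minus B} \<and>
      {fp_plus A, fp_minus A} \<inter> {fp_plus B, fp_minus B} \<noteq> {}"
    obtain lA uA vA where A: "lA > 1" "uA \<noteq> 0" "vA \<noteq> 0" "A *v uA = lA *\<^sub>R uA" "A *v vA = (1/lA) *\<^sub>R vA"
       "fp_plus A = pt_of uA" "fp_minus A = pt_of vA"
      using hyp[OF detA] h by blast
    interpret S2 A B lA lB uA vA uB vB
      using A B detA detB by unfold_locales auto
    show "(trace A \<noteq> trace B \<longrightarrow>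
           complete_optimal A B {if trace A > trace B then [La] else [Lb]}) \<and>
        (trace A = trace B \<and> I_plus A B \<inter> I_minus A B = {} \<longrightarrow>
           (\<forall>w. w \<noteq> [] \<longrightarrow> maximal A B w) \<and> complete_optimal A B {w. lyndon w}) \<and>
        (trace A = trace B \<and> I_plus A B \<inter> I_minus A B \<noteq> {} \<longrightarrow>
           (\<exists>p. I_plus A B \<inter> I_minus A B = {p}) \<and> complete_optimal A B {[La], [Lb]})"
      by (rule part1[OF coh conjunct1[OF conjunct2[OF h]] conjunct2[OF conjunct2[OF h]]])
  qed
  show "trace A = 2 \<and> A \<noteq> mat 1 \<and> fp_plus A \<in> {fp_plus B, fp_minus B} \<longrightarrow>
        complete_optimal A B {[Lb]}"
  proof
    assume h: "trace A = 2 \<and> A \<noteq> mat 1 \<and> fp_plus A \<in> {fp_plus B, fp_minus B}"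
    obtain u where u: "u \<noteq> 0" "A *v u = u" "fp_plus A = pt_of u" using para[OF detA] h by blast
    have Au: "A *v u = 1 *\<^sub>R u" using u by simp
    obtain be where be: "B *v u = be *\<^sub>R u" "be > 0" "be \<noteq> 1" "\<bar>ln be\<bar> > 0"
    proof (cases "fp_plus A = fp_plus B")
      case True
      have "B *v u = lB *\<^sub>R u" using common_eig[OF u(1) B(2) _ B(4)] True u B by simp
      moreover have "\<bar>ln lB\<bar> > 0" using B(1) by simp
      ultimately show ?thesis using that[of lB] B(1) by simp
    next
      case False
      then have "fp_plus A = fp_minus B" using h by simp
      then have "B *v u = (1/lB) *\<^sub>R u" using common_eig[OF u(1) B(3) _ B(5)] u B by simp
      moreover have "\<bar>ln (1/lB)\<bar> > 0" using B(1) by (simp add: ln_div)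
      ultimately show ?thesis using that[of "1/lB"] B(1) by simp
    qed
    interpret wl A B "ln 1" "ln be" by (rule wl_intro[OF u(1) Au be(1) _ be(2) detA detB]) simp
    show "complete_optimal A B {[Lb]}" by (rule W2) (use be(4) in simp)
  qed
qed

end
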